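(* Let $P\in\mathbb{C}[y]$ with $\deg P\geq 2$, $\delta\in\mathbb{C}\setminus\{0\}$, $h_1(x,y)=(y,P(y)-\delta x)$, $\theta\in(0,2\pi)\setminus\{\frac{\pi}{2},\pi,\frac{3\pi}{2}\}$, $R_\theta$ the linear map of $\mathbb{C}^2$ with matrix $\begin{pmatrix}\cos\theta&-\sin\theta\\ \sin\theta&\cos\theta\end{pmatrix}$, and $h_2=R_\theta^{-1}\circ h_1\circ R_\theta$. Then the group $G=\langle h_1,h_2\rangle$ of automorphisms of $\mathbb{C}^2$ is isomorphic to the free group on two generators (freely generated by $h_1,h_2$). *)

theory Defs
  imports Complex_Main "HOL-Computational_Algebra.Polynomial"
begin

definition henon :: "complex poly \<Rightarrow> complex \<Rightarrow> complex \<times> complex \<Rightarrow> complex \<times> complex" where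
  "henon P d = (\<lambda>(x, y). (y, poly P y - d * x))"

definition rot :: "real \<Rightarrow> complex \<times> complex \<Rightarrow> complex \<times> complex" where
  "rot t = (\<lambda>(x, y). (complex_of_real (cos t) * x - complex_of_real (sin t) * y,
                       complex_of_real (sin t) * x + complex_of_real (cos t) * y))"

text \<open>Words in the free group on two letters: a letter is (g, e) where g selects the
  generator (False = first, True = second) and e = True means the inverse of that generator.\<close>
type_synonym letter = "bool \<times> bool"

definition reduced_word :: "letter list \<Rightarrow> bool" where
  "reduced_word w \<longleftrightarrow> (\<forall>i. Suc i < length w \<longrightarrow>
      \<not> (fst (w ! i) = fst (w ! Suc i) \<and> snd (w ! i) \<noteq> snd (w ! Suc i)))"

definition eval_letter :: "('a \<Rightarrow> 'a) \<Rightarrow> ('a \<Rightarrow> 'a) \<Rightarrow> letter \<Rightarrow> ('a \<Rightarrow> 'a)" where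
  "eval_letter f g l = (let h = (if fst l then g else f) in if snd l then inv h else h)"

definition eval_word :: "('a \<Rightarrow> 'a) \<Rightarrow> ('a \<Rightarrow> 'a) \<Rightarrow> letter list \<Rightarrow> ('a \<Rightarrow> 'a)" where
  "eval_word f g w = foldr (\<lambda>l acc. eval_letter f g l \<circ> acc) w id"

definition freely_generate :: "('a \<Rightarrow> 'a) \<Rightarrow> ('a \<Rightarrow> 'a) \<Rightarrow> bool" where
  "freely_generate f g \<longleftrightarrow> (\<forall>w. w \<noteq> [] \<and> reduced_word w \<longrightarrow> eval_word f g w \<noteq> id)"

end

theory Submission
  imports Defs "HOL-Computational_Algebra.Fundamental_Theorem_Algebra"
begin


lemma eval_word_Cons: "eval_word f g (l # w) = eval_letter f g l \<circ> eval_word f g w"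
  by (simp add: eval_word_def)

lemma reduced_tl: "reduced_word (l # w) \<Longrightarrow> reduced_word w"
  unfolding reduced_word_def by (metis Suc_less_eq length_Cons nth_Cons_Suc)

lemma reduced_hd:
  assumes "reduced_word (l # w)" "w \<noteq> []" shows "hd w \<noteq> (fst l, \<not> snd l)"
proof -
  obtain a u where w: "w = a # u" using assms(2) by (cases w) auto
  have "\<not> (fst l = fst a \<and> snd l \<noteq> snd a)"
    using assms(1) unfolding reduced_word_def w by (auto dest: spec[of _ 0])
  then show ?thesis using w by (cases a) auto
qed

lemma pingpong_run:
  assumes tr: "\<And>l r p. r \<noteq> (fst l, \<not> snd l) \<Longrightarrow> p \<in> reg r \<Longrightarrow> eval_letter f g l p \<in> reg l"
  shows "w \<noteq> [] \<Longrightarrow> reduced_word w \<Longrightarrow> r \<noteq> (fst (last w), \<not> snd (last w)) \<Longrightarrow> p \<in> reg r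
     \<Longrightarrow> eval_word f g w p \<in> reg (hd w)"
proof (induction w)
  case Nil then show ?case by simp
next
  case (Cons l w)
  show ?case
  proof (cases "w = []")
    case True
    then show ?thesis using Cons.prems tr by (simp add: eval_word_def)
  next
    case False
    have "eval_word f g w p \<in> reg (hd w)"
      using Cons.IH[OF False reduced_tl[OF Cons.prems(2)]] Cons.prems False by simp
    moreover have "hd w \<noteq> (fst l, \<not> snd l)" using reduced_hd[OF Cons.prems(2) False] .
    ultimately show ?thesis using tr by (simp add: eval_word_Cons)
  qed
qed

lemma pingpong:
  assumes tr: "\<And>l r p. r \<noteq> (fst l, \<not> snd l) \<Longrightarrow> p \<in> reg r \<Longrightarrow> eval_letter f g l p \<in> reg l"
    and disj: "\<And>l l'. l \<noteq> l' \<Longrightarrow> reg l \<inter> reg l' = {}"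
    and ne: "\<And>l. reg l \<noteq> {}"
  shows "freely_generate f g"
  unfolding freely_generate_def
proof (intro allI impI)
  fix w :: "letter list" assume w: "w \<noteq> [] \<and> reduced_word w"
  obtain r :: letter where r: "r \<noteq> (fst (last w), \<not> snd (last w))" "r \<noteq> hd w"
  proof -
    define a where "a = fst (last w)"
    define b where "b = (\<not> snd (last w))"
    define c where "c = fst (hd w)"
    define d where "d = snd (hd w)"
    have x: "(fst (last w), \<not> snd (last w)) = (a, b)" by (simp add: a_def b_def)
    have y: "hd w = (c, d)" by (simp add: c_def d_def)
    have "\<exists>r\<in>{(False,False),(False,True),(True,False)}. r \<noteq> (a, b) \<and> r \<noteq> (c, d)"
      by (cases a; cases b; cases c; cases d) auto
    then have "\<exists>r::letter. r \<noteq> (fst (last w), \<not> snd (last w)) \<and> r \<noteq> hd w"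
      unfolding x y by blast
    then show ?thesis using that by blast
  qed
  obtain p where p: "p \<in> reg r" using ne[of r] by blast
  have "eval_word f g w p \<in> reg (hd w)" proof (rule pingpong_run[of reg f g w r p])
    show "\<And>l r p. r \<noteq> (fst l, \<not> snd l) \<Longrightarrow> p \<in> reg r \<Longrightarrow> eval_letter f g l p \<in> reg l"
      by (rule tr)
  qed (use w r p in simp_all)
  then have "eval_word f g w p \<noteq> p" using disj[OF r(2)] p by (metis IntI empty_iff)
  then show "eval_word f g w \<noteq> id" by (metis id_apply)
qed



lemma poly_growth:
  fixes P :: "complex poly"
  assumes "degree P \<ge> 2"
  shows "\<exists>N\<ge>0. \<forall>z. N \<le> norm z \<longrightarrow> C * norm z + 1 \<le> norm (poly P z)"
proof -
  obtain a Q where PQ: "P = pCons a Q" by (cases P) auto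
  have dQ: "degree Q \<ge> 1" using assms PQ by (cases "Q = 0") auto
  obtain b S where QS: "Q = pCons b S" by (cases Q) auto
  have "S \<noteq> 0" using dQ QS by auto
  from poly_infinity[OF this, of "\<bar>C\<bar> + 1 + norm a" b]
  obtain r where r: "\<And>z. r \<le> norm z \<Longrightarrow> \<bar>C\<bar> + 1 + norm a \<le> norm (poly Q z)"
    using QS by auto
  define N where "N = max 1 r"
  have "\<forall>z. N \<le> norm z \<longrightarrow> C * norm z + 1 \<le> norm (poly P z)"
  proof (intro allI impI)
    fix z :: complex assume z: "N \<le> norm z"
    have z1: "1 \<le> norm z" and zr: "r \<le> norm z" using z N_def by auto
    have q: "\<bar>C\<bar> + 1 + norm a \<le> norm (poly Q z)" using r zr .
    have "poly P z = a + z * poly Q z" using PQ by simp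
    then have "norm (z * poly Q z) - norm a \<le> norm (poly P z)"
      by (metis add.commute norm_diff_ineq)
    moreover have "norm (z * poly Q z) = norm z * norm (poly Q z)" by (simp add: norm_mult)
    moreover have "norm z * (\<bar>C\<bar> + 1 + norm a) \<le> norm z * norm (poly Q z)"
      using q by (simp add: mult_left_mono)
    moreover have "C * norm z + 1 + norm a \<le> norm z * (\<bar>C\<bar> + 1 + norm a)"
    proof -
      have "C * norm z \<le> \<bar>C\<bar> * norm z" by (simp add: mult_right_mono)
      moreover have "1 + norm a \<le> norm z * (1 + norm a)" using mult_right_mono[OF z1, of "1 + norm a"] by simp
      ultimately show ?thesis by (simp add: algebra_simps)
    qed
    ultimately show "C * norm z + 1 \<le> norm (poly P z)" by linarith
  qed
  then show ?thesis using N_def by (intro exI[of _ N]) auto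
qed

definition Ap :: "real \<Rightarrow> real \<Rightarrow> (complex \<times> complex) set" where
  "Ap e R = {p. R < norm (snd p) \<and> norm (fst p) \<le> e * norm (snd p)}"
definition Am :: "real \<Rightarrow> real \<Rightarrow> (complex \<times> complex) set" where
  "Am e R = {p. R < norm (fst p) \<and> norm (snd p) \<le> e * norm (fst p)}"
definition Cc :: "real \<Rightarrow> real \<Rightarrow> (complex \<times> complex) set" where
  "Cc e R = {p. 2*e*norm (snd p) \<le> norm (fst p) \<and> 2*e*norm (fst p) \<le> norm (snd p)
     \<and> e*R \<le> norm (fst p) \<and> e*R \<le> norm (snd p)}"
definition Gp :: "real \<Rightarrow> real \<Rightarrow> (complex \<times> complex) set" where
  "Gp e R = {p. e*R \<le> norm (snd p) \<and> 2*e*norm (fst p) \<le> norm (snd p)}"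
definition Gm :: "real \<Rightarrow> real \<Rightarrow> (complex \<times> complex) set" where
  "Gm e R = {p. e*R \<le> norm (fst p) \<and> 2*e*norm (snd p) \<le> norm (fst p)}"

definition hinv :: "complex poly \<Rightarrow> complex \<Rightarrow> complex \<times> complex \<Rightarrow> complex \<times> complex" where
  "hinv P d = (\<lambda>(x, y). ((poly P x - y) / d, x))"

lemma lin_bounds:
  fixes a b :: complex and c s e R :: real
  assumes e: "0 < e" "e \<le> 1/4" and cs: "4*e \<le> \<bar>c\<bar>" "\<bar>c\<bar> \<le> 1" "\<bar>s\<bar> \<le> 1"
    and ab: "R < norm b" "norm a \<le> e * norm b"
  shows "3*e*norm b \<le> norm (of_real c * b + of_real s * a)"
    and "norm (of_real c * b + of_real s * a) \<le> (1+e) * norm b"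
proof -
  have n1: "norm (of_real c * b) = \<bar>c\<bar> * norm b" by (simp add: norm_mult)
  have n2: "norm (of_real s * a) = \<bar>s\<bar> * norm a" by (simp add: norm_mult)
  have "\<bar>c\<bar> * norm b \<ge> 4*e*norm b" using cs by (simp add: mult_right_mono)
  moreover have "\<bar>s\<bar> * norm a \<le> e * norm b" using cs ab
    by (meson dual_order.trans mult_left_le_one_le norm_ge_zero abs_ge_zero)
  moreover have "norm (of_real c * b) - norm (of_real s * a) \<le> norm (of_real c * b + of_real s * a)"
    by (metis norm_diff_ineq)
  moreover have "norm (of_real c * b + of_real s * a) \<le> norm (of_real c * b) + norm (of_real s * a)"
    by (rule norm_triangle_ineq)
  moreover have "\<bar>c\<bar> * norm b \<le> norm b" using cs by (simp add: mult_left_le_one_le)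
  ultimately show "3*e*norm b \<le> norm (of_real c * b + of_real s * a)"
    and "norm (of_real c * b + of_real s * a) \<le> (1+e) * norm b"
    using n1 n2 by (auto simp: algebra_simps)
qed




lemma cc_of_bounds:
  fixes e R n U V :: real
  assumes "0 < e" "e \<le> 1/4" "R < n" "0 \<le> R"
    "3*e*n \<le> U" "U \<le> (1+e)*n" "3*e*n \<le> V" "V \<le> (1+e)*n"
  shows "2*e*V \<le> U \<and> 2*e*U \<le> V \<and> e*R \<le> U \<and> e*R \<le> V"
proof -
  have n0: "0 \<le> n" using assms by linarith
  have a: "2*e*((1+e)*n) \<le> 3*e*n"
  proof -
    have "2*e*((1+e)*n) = (e*n) * (2 + 2*e)" by (simp add: algebra_simps)
    also have "\<dots> \<le> (e*n) * 3" using assms n0 by (intro mult_left_mono) auto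
    finally show ?thesis by (simp add: algebra_simps)
  qed
  have b: "2*e*V \<le> 2*e*((1+e)*n)" "2*e*U \<le> 2*e*((1+e)*n)"
    using assms by (auto intro!: mult_left_mono)
  have c0: "e*R \<le> e*n" using assms by (auto intro!: mult_left_mono)
  have c1: "e*n \<le> 3*e*n" using assms n0 by simp
  have c: "e*R \<le> 3*e*n" using c0 c1 by linarith
  show ?thesis using a b c assms by linarith
qed

lemma rot_into_Cc:
  assumes e: "0 < e" "e \<le> 1/4" and R: "0 \<le> R"
    and cs: "4*e \<le> \<bar>cos t\<bar>" "4*e \<le> \<bar>sin t\<bar>"
    and p: "p \<in> Ap e R \<union> Am e R"
  shows "rot t p \<in> Cc e R"
proof -
  obtain a b where pab: "p = (a, b)" by (cases p)
  have c1: "\<bar>cos t\<bar> \<le> 1" "\<bar>sin t\<bar> \<le> 1" "\<bar>- sin t\<bar> \<le> 1" "\<bar>- cos t\<bar> \<le> 1" by auto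
  have cs4: "4*e \<le> \<bar>- cos t\<bar>" "4*e \<le> \<bar>- sin t\<bar>" using cs by simp_all
  have rt: "rot t p = (of_real (- sin t) * b + of_real (cos t) * a, of_real (cos t) * b + of_real (sin t) * a)"
     "rot t p = (of_real (cos t) * a + of_real (- sin t) * b, of_real (sin t) * a + of_real (cos t) * b)"
    by (simp_all add: rot_def pab)
  show ?thesis
  proof (cases "p \<in> Ap e R")
    case True
    then have ab: "R < norm b" "norm a \<le> e * norm b" by (auto simp: Ap_def pab)
    have u: "3*e*norm b \<le> norm (of_real (- sin t) * b + of_real (cos t) * a)"
      "norm (of_real (- sin t) * b + of_real (cos t) * a) \<le> (1+e) * norm b"
      using lin_bounds[OF e cs4(2) c1(3) c1(1) ab] .
    have v: "3*e*norm b \<le> norm (of_real (cos t) * b + of_real (sin t) * a)"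
      "norm (of_real (cos t) * b + of_real (sin t) * a) \<le> (1+e) * norm b"
      using lin_bounds[OF e cs(1) c1(1) c1(2) ab] .
    have "rot t p \<in> Cc e R" unfolding rt(1) Cc_def mem_Collect_eq fst_conv snd_conv
      by (rule cc_of_bounds[OF e ab(1) R u v])
    then show ?thesis .
  next
    case False
    then have "p \<in> Am e R" using p by auto
    then have ab: "R < norm a" "norm b \<le> e * norm a" by (auto simp: Am_def pab)
    have u: "3*e*norm a \<le> norm (of_real (cos t) * a + of_real (- sin t) * b)"
      "norm (of_real (cos t) * a + of_real (- sin t) * b) \<le> (1+e) * norm a"
      using lin_bounds[OF e cs(1) c1(1) c1(3) ab] .
    have v: "3*e*norm a \<le> norm (of_real (sin t) * a + of_real (cos t) * b)"
      "norm (of_real (sin t) * a + of_real (cos t) * b) \<le> (1+e) * norm a"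
      using lin_bounds[OF e cs(2) c1(2) c1(1) ab] .
    have "rot t p \<in> Cc e R" unfolding rt(2) Cc_def mem_Collect_eq fst_conv snd_conv
      by (rule cc_of_bounds[OF e ab(1) R u v])
    then show ?thesis .
  qed
qed




lemma henon_Gp:
  fixes P :: "complex poly" and d :: complex
  assumes e: "0 < e" and R: "0 \<le> R"
    and g: "\<And>z. e*R \<le> norm z \<Longrightarrow> 3*(1+norm d)/e * norm z + 1 \<le> norm (poly P z)"
    and p: "p \<in> Gp e R"
  shows "henon P d p \<in> Ap e R"
proof -
  obtain x y where pxy: "p = (x, y)" by (cases p)
  define X Y D W where "X = norm x" "Y = norm y" "D = norm d" "W = norm (poly P y - d * x)"
  have h1: "e*R \<le> Y" "2*e*X \<le> Y" using p by (auto simp: Gp_def pxy X_Y_D_W_def)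
  have gy: "3*(1+D)/e * Y + 1 \<le> norm (poly P y)" using g h1(1) by (simp add: X_Y_D_W_def)
  have eg: "e * (3*(1+D)/e * Y + 1) = 3*(1+D)*Y + e" using e by (simp add: field_simps)
  have gy2: "3*(1+D)*Y + e \<le> e * norm (poly P y)"
  proof -
    have "e * (3*(1+D)/e * Y + 1) \<le> e * norm (poly P y)"
      by (rule mult_left_mono[OF gy]) (use e in simp)
    then show ?thesis using eg by linarith
  qed
  have W1: "norm (poly P y) - D * X \<le> W"
    using norm_triangle_ineq2[of "poly P y" "d * x"] by (simp add: X_Y_D_W_def norm_mult)
  have W2: "e * norm (poly P y) - e * (D * X) \<le> e * W"
    using mult_left_mono[OF W1, of e] e by (simp add: algebra_simps)
  have D0: "0 \<le> D" "0 \<le> Y" by (simp_all add: X_Y_D_W_def)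
  have DX: "2 * (e * (D * X)) \<le> D * Y"
    using mult_left_mono[OF h1(2) D0(1)] by (simp add: algebra_simps)
  have DY: "0 \<le> D * Y" using D0 by simp
  have eW: "2*Y + e \<le> e * W" using W2 gy2 DX DY D0 by (simp only: algebra_simps)
  have RW: "R < W"
  proof (rule ccontr)
    assume "\<not> R < W" then have "e * W \<le> e * R" using e by (simp add: mult_left_mono)
    then show False using eW h1(1) e D0 by linarith
  qed
  have "Y \<le> e * W" using eW D0 e by linarith
  then show ?thesis using RW unfolding Ap_def henon_def pxy X_Y_D_W_def by simp
qed

lemma hinv_Gm:
  fixes P :: "complex poly" and d :: complex
  assumes e: "0 < e" and R: "0 \<le> R" and d: "d \<noteq> 0"
    and g: "\<And>z. e*R \<le> norm z \<Longrightarrow> 3*(1+norm d)/e * norm z + 1 \<le> norm (poly P z)"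
    and p: "p \<in> Gm e R"
  shows "hinv P d p \<in> Am e R"
proof -
  obtain x y where pxy: "p = (x, y)" by (cases p)
  define X Y D W where "X = norm x" "Y = norm y" "D = norm d" "W = norm (poly P x - y)"
  have h1: "e*R \<le> X" "2*e*Y \<le> X" using p by (auto simp: Gm_def pxy X_Y_D_W_def)
  have gx: "3*(1+D)/e * X + 1 \<le> norm (poly P x)" using g h1(1) by (simp add: X_Y_D_W_def)
  have eg: "e * (3*(1+D)/e * X + 1) = 3*(1+D)*X + e" using e by (simp add: field_simps)
  have gx2: "3*(1+D)*X + e \<le> e * norm (poly P x)"
  proof -
    have "e * (3*(1+D)/e * X + 1) \<le> e * norm (poly P x)"
      by (rule mult_left_mono[OF gx]) (use e in simp)
    then show ?thesis using eg by linarith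
  qed
  have W1: "norm (poly P x) - Y \<le> W"
    using norm_triangle_ineq2[of "poly P x" "y"] by (simp add: X_Y_D_W_def)
  have W2: "e * norm (poly P x) - e * Y \<le> e * W"
    using mult_left_mono[OF W1, of e] e by (simp add: algebra_simps)
  have D0: "0 < D" "0 \<le> X" using d by (simp_all add: X_Y_D_W_def)
  have DX: "0 \<le> D * X" using D0 by simp
  have eW: "2*(D*X) + e \<le> e * W" using W2 gx2 DX D0 h1(2) by (simp only: algebra_simps)
  have DR: "e * (D * R) \<le> D * X" using mult_left_mono[OF h1(1), of D] D0
    by (simp add: algebra_simps)
  have RW: "D * R < W"
  proof (rule ccontr)
    assume "\<not> D * R < W" then have "e * W \<le> e * (D * R)" using e by (simp add: mult_left_mono)
    then show False using eW DR e DX by linarith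
  qed
  have XW: "D * X \<le> e * W" using eW DX e by linarith
  have q1: "R < W / D" using RW D0 by (simp add: field_simps)
  have q2: "X \<le> e * (W / D)" using XW D0 by (simp add: field_simps)
  have n: "norm ((poly P x - y) / d) = W / D" by (simp add: X_Y_D_W_def norm_divide)
  show ?thesis using q1 q2 n unfolding Am_def hinv_def pxy X_Y_D_W_def by simp
qed




lemma angle_facts:
  assumes "0 < \<theta>" "\<theta> < 2 * pi" "\<theta> \<notin> {pi / 2, pi, 3 * pi / 2}"
  shows "sin \<theta> \<noteq> 0" "cos \<theta> \<noteq> 0"
proof
  assume "sin \<theta> = 0"
  then obtain i :: int where i: "\<theta> = of_int i * pi" by (auto simp: sin_zero_iff_int2)
  have "0 < of_int i * pi" "of_int i * pi < 2 * pi" using assms i by auto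
  then have "0 < real_of_int i" "real_of_int i < 2"
    by (simp_all add: zero_less_mult_iff mult_less_cancel_right pi_gt_zero)
  then have "i = 1" by linarith
  then show False using i assms by simp
next
  show "cos \<theta> \<noteq> 0"
  proof
    assume "cos \<theta> = 0"
    then obtain n :: int where n: "\<theta> = of_int n * pi + pi/2" by (auto simp: cos_zero_iff_int2)
    have "\<theta> = (of_int n + 1/2) * pi" using n by (simp add: algebra_simps)
    then have "0 < (of_int n + 1/2) * pi" "(of_int n + 1/2) * pi < 2 * pi" using assms by auto
    then have "0 < real_of_int n + 1/2" "real_of_int n + 1/2 < 2"
      by (simp_all add: zero_less_mult_iff mult_less_cancel_right pi_gt_zero)
    then have "n = 0 \<or> n = 1" by linarith
    then show False using n assms by (auto simp: algebra_simps)
  qed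
qed

lemma hinv_henon: "d \<noteq> 0 \<Longrightarrow> hinv P d (henon P d p) = p"
  by (cases p) (simp add: hinv_def henon_def)
lemma henon_hinv: "d \<noteq> 0 \<Longrightarrow> henon P d (hinv P d p) = p"
  by (cases p) (simp add: hinv_def henon_def)

lemma rot_inv: "rot (- t) (rot t p) = p"
proof -
  obtain x y where p: "p = (x, y)" by (cases p)
  have c: "complex_of_real (cos t) * complex_of_real (cos t) + complex_of_real (sin t) * complex_of_real (sin t) = 1"
    by (metis of_real_add of_real_mult of_real_1 sin_cos_squared_add3 add.commute)
  have "rot (- t) (rot t p) =
    ((complex_of_real (cos t) * complex_of_real (cos t) + complex_of_real (sin t) * complex_of_real (sin t)) * x,
     (complex_of_real (cos t) * complex_of_real (cos t) + complex_of_real (sin t) * complex_of_real (sin t)) * y)"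
    by (simp add: rot_def p algebra_simps)
  then show ?thesis using c p by simp
qed

lemma rot_inv': "rot t (rot (- t) p) = p"
  using rot_inv[of "- t" p] by simp




theorem mainTheorem2:
  fixes P :: "complex poly" and \<delta> :: complex and \<theta> :: real
  assumes "degree P \<ge> 2"
    and "\<delta> \<noteq> 0"
    and "0 < \<theta>" and "\<theta> < 2 * pi"
    and "\<theta> \<notin> {pi / 2, pi, 3 * pi / 2}"
  shows "bij (henon P \<delta>) \<and> bij (rot \<theta>) \<and>
         freely_generate (henon P \<delta>) (inv (rot \<theta>) \<circ> henon P \<delta> \<circ> rot \<theta>)"
proof -
  let ?h = "henon P \<delta>" and ?k = "hinv P \<delta>" and ?r = "rot \<theta>" and ?s = "rot (- \<theta>)"
  have invh: "inv ?h = ?k" by (rule inv_equality) (simp_all add: hinv_henon henon_hinv assms(2))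
  have bijh: "bij ?h"
    by (rule o_bij[of ?k]) (rule ext, simp add: hinv_henon henon_hinv assms(2))+
  have invr: "inv ?r = ?s" by (rule inv_equality) (simp_all add: rot_inv rot_inv')
  have bijr: "bij ?r"
    by (rule o_bij[of ?s]) (rule ext, simp add: rot_inv rot_inv')+
  let ?g = "inv ?r \<circ> ?h \<circ> ?r"
  have g: "?g = ?s \<circ> ?h \<circ> ?r" using invr by simp
  have invg: "inv ?g = ?s \<circ> ?k \<circ> ?r"
    unfolding g by (rule inv_equality) (simp_all add: rot_inv rot_inv' hinv_henon henon_hinv assms(2))
  have sc: "sin \<theta> \<noteq> 0" "cos \<theta> \<noteq> 0" using angle_facts assms(3-5) by auto
  define e where "e = min \<bar>cos \<theta>\<bar> \<bar>sin \<theta>\<bar> / 4"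
  have e0: "0 < e" using sc by (simp add: e_def)
  have e1: "e \<le> 1/4" using abs_sin_le_one[of \<theta>] by (simp add: e_def min_def)
  have ecs: "4*e \<le> \<bar>cos \<theta>\<bar>" "4*e \<le> \<bar>sin \<theta>\<bar>" "4*e \<le> \<bar>cos (- \<theta>)\<bar>" "4*e \<le> \<bar>sin (- \<theta>)\<bar>"
    by (simp_all add: e_def)
  have ee: "e*e \<le> (1/4)*(1/4)" by (rule mult_mono) (use e0 e1 in auto)
  obtain N where N: "N \<ge> 0" "\<And>z. N \<le> norm z \<Longrightarrow> 3*(1+norm \<delta>)/e * norm z + 1 \<le> norm (poly P z)"
    using poly_growth[OF assms(1), of "3*(1+norm \<delta>)/e"] by blast
  define R where "R = N / e + 1"
  have R0: "0 < R" using N(1) e0 by (simp add: R_def add_nonneg_pos)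
  have eR: "N \<le> e * R" using e0 N(1) by (simp add: R_def field_simps)
  have gr: "\<And>z. e*R \<le> norm z \<Longrightarrow> 3*(1+norm \<delta>)/e * norm z + 1 \<le> norm (poly P z)"
  proof -
    fix z :: complex assume "e*R \<le> norm z"
    then show "3*(1+norm \<delta>)/e * norm z + 1 \<le> norm (poly P z)" by (intro N(2)) (use eR in linarith)
  qed
  have ApG: "p \<in> Ap e R \<Longrightarrow> p \<in> Gp e R" for p
  proof -
    assume p: "p \<in> Ap e R"
    have a: "e * R \<le> R" using e0 e1 R0 by (simp add: mult_le_cancel_right1)
    have b: "2*e*(e * norm (snd p)) \<le> norm (snd p)"
    proof -
      have "2*e*e \<le> 1" using ee by linarith
      then have "(2*e*e) * norm (snd p) \<le> 1 * norm (snd p)" by (intro mult_right_mono) simp_all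
      then show ?thesis by (simp add: algebra_simps)
    qed
    have c: "2*e*norm (fst p) \<le> 2*e*(e * norm (snd p))" using p e0 by (simp add: Ap_def)
    show ?thesis using p a b c by (auto simp: Ap_def Gp_def)
  qed
  have AmG: "p \<in> Am e R \<Longrightarrow> p \<in> Gm e R" for p
  proof -
    assume p: "p \<in> Am e R"
    have a: "e * R \<le> R" using e0 e1 R0 by (simp add: mult_le_cancel_right1)
    have b: "2*e*(e * norm (fst p)) \<le> norm (fst p)"
    proof -
      have "2*e*e \<le> 1" using ee by linarith
      then have "(2*e*e) * norm (fst p) \<le> 1 * norm (fst p)" by (intro mult_right_mono) simp_all
      then show ?thesis by (simp add: algebra_simps)
    qed
    have c: "2*e*norm (snd p) \<le> 2*e*(e * norm (fst p))" using p e0 by (simp add: Am_def)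
    show ?thesis using p a b c by (auto simp: Am_def Gm_def)
  qed
  have CG: "p \<in> Cc e R \<Longrightarrow> p \<in> Gp e R \<and> p \<in> Gm e R" for p
    by (simp add: Cc_def Gp_def Gm_def)
  have rC: "p \<in> Ap e R \<or> p \<in> Am e R \<Longrightarrow> ?r p \<in> Cc e R" for p
    using rot_into_Cc[OF e0 e1 _ ecs(1,2)] R0 by auto
  have sC: "?r p \<in> Ap e R \<or> ?r p \<in> Am e R \<Longrightarrow> p \<in> Cc e R" for p
    using rot_into_Cc[OF e0 e1 _ ecs(3,4), of R "?r p"] R0 by (auto simp: rot_inv)
  have hG: "p \<in> Gp e R \<Longrightarrow> ?h p \<in> Ap e R" for p
    using henon_Gp[OF e0 _ gr] R0 by auto
  have kG: "p \<in> Gm e R \<Longrightarrow> ?k p \<in> Am e R" for p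
    using hinv_Gm[OF e0 _ assms(2) gr] R0 by auto
  have dAA: "p \<in> Ap e R \<Longrightarrow> p \<in> Am e R \<Longrightarrow> False" for p
  proof -
    assume a: "p \<in> Ap e R" "p \<in> Am e R"
    then have f: "norm (fst p) \<le> e * norm (snd p)" "norm (snd p) \<le> e * norm (fst p)" "R < norm (fst p)"
      by (auto simp: Ap_def Am_def)
    have f2: "e * norm (snd p) \<le> e * (e * norm (fst p))"
      using f e0 by simp
    have f0: "0 < norm (fst p)" using f(3) R0 by linarith
    have "e * e < 1" using ee by linarith
    then have "(e * e) * norm (fst p) < 1 * norm (fst p)" using f0 by (intro mult_strict_right_mono) simp_all
    then have f3: "e * (e * norm (fst p)) < norm (fst p)" by (simp add: algebra_simps)
    show False using f f2 f3 by linarith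
  qed
  have dCA: "p \<in> Cc e R \<Longrightarrow> p \<in> Ap e R \<Longrightarrow> False" for p
  proof -
    assume a: "p \<in> Cc e R" "p \<in> Ap e R"
    then have "2*e*norm (snd p) \<le> norm (fst p)" "norm (fst p) \<le> e * norm (snd p)" "R < norm (snd p)"
      by (auto simp: Ap_def Cc_def)
    moreover have "0 < norm (snd p)" using calculation R0 by linarith
    moreover have "e * norm (snd p) < (2*e)*norm (snd p)"
      using calculation e0 by (intro mult_strict_right_mono) simp_all
    ultimately show False by linarith
  qed
  have dCB: "p \<in> Cc e R \<Longrightarrow> p \<in> Am e R \<Longrightarrow> False" for p
  proof -
    assume a: "p \<in> Cc e R" "p \<in> Am e R"
    then have "2*e*norm (fst p) \<le> norm (snd p)" "norm (snd p) \<le> e * norm (fst p)" "R < norm (fst p)"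
      by (auto simp: Am_def Cc_def)
    moreover have "0 < norm (fst p)" using calculation R0 by linarith
    moreover have "e * norm (fst p) < (2*e)*norm (fst p)"
      using calculation e0 by (intro mult_strict_right_mono) simp_all
    ultimately show False by linarith
  qed
  define reg :: "letter \<Rightarrow> (complex \<times> complex) set" where
    "reg l = (if fst l then (if snd l then ?r -` Am e R else ?r -` Ap e R)
              else (if snd l then Am e R else Ap e R))" for l
  have regFF: "reg (False, False) = Ap e R" and regFT: "reg (False, True) = Am e R"
    and regTF: "reg (True, False) = ?r -` Ap e R" and regTT: "reg (True, True) = ?r -` Am e R"
    by (simp_all add: reg_def)
  have tr: "eval_letter ?h ?g l p \<in> reg l" if "r \<noteq> (fst l, \<not> snd l)" "p \<in> reg r" for l r p
  proof -
    obtain a b where l: "l = (a, b)" by (cases l)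
    obtain c d where r: "r = (c, d)" by (cases r)
    have m: "(\<not> c \<and> \<not> d \<and> p \<in> Ap e R) \<or> (\<not> c \<and> d \<and> p \<in> Am e R) \<or>
          (c \<and> \<not> d \<and> ?r p \<in> Ap e R) \<or> (c \<and> d \<and> ?r p \<in> Am e R)"
      using that(2) unfolding r by (cases c; cases d) (simp_all only: regFF regFT regTF regTT vimage_eq, simp_all)
    have ev: "eval_letter ?h ?g (False, False) = ?h" "eval_letter ?h ?g (False, True) = ?k"
      "eval_letter ?h ?g (True, False) = ?s \<circ> ?h \<circ> ?r" "eval_letter ?h ?g (True, True) = ?s \<circ> ?k \<circ> ?r"
      using invg g by (simp_all add: eval_letter_def invh invr)
    show ?thesis
    proof (cases a)
      case False
      then show ?thesis
      proof (cases b)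
        case False
        have "\<not> (\<not> c \<and> d)" using that(1) \<open>\<not> a\<close> False l r by simp
        then have "p \<in> Gp e R" using m ApG sC CG by blast
        then show ?thesis using hG \<open>\<not> a\<close> False l ev regFF by simp
      next
        case True
        have "\<not> (\<not> c \<and> \<not> d)" using that(1) \<open>\<not> a\<close> True l r by simp
        then have "p \<in> Gm e R" using m AmG sC CG by blast
        then show ?thesis using kG \<open>\<not> a\<close> True l ev regFT by simp
      qed
    next
      case True
      then show ?thesis
      proof (cases b)
        case False
        have "\<not> (c \<and> d)" using that(1) \<open>a\<close> False l r by simp
        then have "?r p \<in> Gp e R" using m ApG rC CG by blast
        then have "?r (?s (?h (?r p))) \<in> Ap e R" using hG by (simp add: rot_inv')
        then show ?thesis using \<open>a\<close> False l ev regTF by simp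
      next
        case True
        have "\<not> (c \<and> \<not> d)" using that(1) \<open>a\<close> True l r by simp
        then have "?r p \<in> Gm e R" using m AmG rC CG by blast
        then have "?r (?s (?k (?r p))) \<in> Am e R" using kG by (simp add: rot_inv')
        then show ?thesis using \<open>a\<close> True l ev regTT by simp
      qed
    qed
  qed
  have disj: "reg l \<inter> reg l' = {}" if "l \<noteq> l'" for l l'
  proof (rule equals0I)
    fix p assume p: "p \<in> reg l \<inter> reg l'"
    have A1: "\<not> (p \<in> Ap e R \<and> p \<in> Am e R)" using dAA by blast
    have A2: "\<not> (?r p \<in> Ap e R \<and> ?r p \<in> Am e R)" using dAA by blast
    have A3: "\<not> (p \<in> Ap e R \<and> (?r p \<in> Ap e R \<or> ?r p \<in> Am e R))" using sC dCA by blast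
    have A4: "\<not> (p \<in> Am e R \<and> (?r p \<in> Ap e R \<or> ?r p \<in> Am e R))" using sC dCB by blast
    obtain a b where l: "l = (a, b)" by (cases l)
    obtain c d where l': "l' = (c, d)" by (cases l')
    show False using that p A1 A2 A3 A4 unfolding reg_def l l'
      by (cases a; cases b; cases c; cases d) simp_all
  qed
  have ne: "reg l \<noteq> {}" for l
  proof -
    have p1: "(0, of_real (R+1)) \<in> Ap e R" using R0 e0 by (simp add: Ap_def)
    have p2: "(of_real (R+1), 0) \<in> Am e R" using R0 e0 by (simp add: Am_def)
    have "?s (0, of_real (R+1)) \<in> ?r -` Ap e R" using p1 by (simp add: rot_inv')
    moreover have "?s (of_real (R+1), 0) \<in> ?r -` Am e R" using p2 by (simp add: rot_inv')
    ultimately show ?thesis using p1 p2 regFF regFT regTF regTT by (cases l) (metis (full_types) empty_iff)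
  qed
  have "freely_generate ?h ?g" by (rule pingpong[OF tr disj ne])
  then show ?thesis using bijh bijr by simp
qed


end
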